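(* Let $F$ be a field, $U,V$ finite-dimensional $F$-vector spaces with $\dim U=n$ and $\dim V=m$, $A:U\times U\to V$ an alternating bilinear map whose image spans $V$, $u_1<\dots<u_n$ an ordered basis of $U$, and $\mathcal{B}$, $W(\mathcal{B})$ as in the context. Let $r,t$ be non-negative integers with $\binom{n}{2}-m=\binom{r}{2}+t$ and $0\le t<r$. Then $W(\mathcal{B})$ contains at least $\binom{n}{3}-\binom{r}{3}-\binom{t}{2}$ linearly independent elements. In particular $\dim\operatorname{Im}\Psi\ge\binom{n}{3}-\binom{r}{3}-\binom{t}{2}$.
   Context: $\mathcal{Y}$ is the set of $2$-element subsets of $\{1,\dots,n\}$, totally ordered by $\{i,j\}<\{r,s\}$ iff $\max\{i,j\}<\max\{r,s\}$, or the maxima are equal to $a$ and the remaining element of $\{i,j\}\setminus\{a\}$ is smaller than that of $\{r,s\}\setminus\{a\}$. $\mathcal{B}$ is constructed as follows: $\mathcal{B}_0=B_0=\emptyset$; inductively let $\{i,j\}$ ($i<j$) be the least element of $\mathcal{Y}$ with $A(u_i,u_j)\notin\operatorname{span}(B_k)$, and set $\mathcal{B}_{k+1}=\mathcal{B}_k\cup\{\{i,j\}\}$, $B_{k+1}=B_k\cup\{A(u_i,u_j)\}$; stop at $k=m$ and put $\mathcal{B}=\mathcal{B}_m$. $\Psi:U\otimes_F U\otimes_F U\to V\otimes_F U$ is the linear map with $\Psi(x\otimes y\otimes z)=A(x,y)\otimes z+A(y,z)\otimes x+A(z,x)\otimes y$. $W(\mathcal{B})$ is the set of elements $\Psi(u_i\otimes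 u_j\otimes u_k)$ with $i<j<k$ such that $\{i,j,k\}$ contains a $2$-element subset belonging to $\mathcal{B}$. Binomial coefficients satisfy $\binom{a}{b}=0$ when $0\le a<b$. *)

theory Defs
  imports Complex_Main "HOL-Library.Product_Lexorder" "HOL-Library.Function_Algebras"
begin

definition Ypairs :: "nat \<Rightarrow> nat set set" where
  "Ypairs n = {S. S \<subseteq> {1..n} \<and> card S = 2}"

text \<open>Total order on Y: compare maxima first, then the remaining (= minimal) element.
  key S < key T (lexicographic order on nat \<times> nat) is exactly the order of the paper.\<close>
definition Ykey :: "nat set \<Rightarrow> nat \<times> nat" where
  "Ykey S = (Max S, Min S)"

definition Aval :: "('u \<Rightarrow> 'u \<Rightarrow> 'v) \<Rightarrow> (nat \<Rightarrow> 'u) \<Rightarrow> nat set \<Rightarrow> 'v" where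
  "Aval A u S = A (u (Min S)) (u (Max S))"

fun Bseq :: "('f::field \<Rightarrow> 'v::ab_group_add \<Rightarrow> 'v) \<Rightarrow> ('u \<Rightarrow> 'u \<Rightarrow> 'v) \<Rightarrow> (nat \<Rightarrow> 'u)
              \<Rightarrow> nat \<Rightarrow> nat \<Rightarrow> nat set set" where
  "Bseq scaleV A u n 0 = {}"
| "Bseq scaleV A u n (Suc k) =
     (let C = {S \<in> Ypairs n. Aval A u S \<notin> module.span scaleV (Aval A u ` Bseq scaleV A u n k)}
      in if C = {} then Bseq scaleV A u n k
         else insert (ARG_MIN Ykey S. S \<in> C) (Bseq scaleV A u n k))"

text \<open>V \<otimes> U is identified with the space of functions nat \<Rightarrow> V (supported on {1..n})
  via the basis u: \<Sum>_l v_l \<otimes> u_l corresponds to (\<lambda>l. v_l).\<close>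
definition scaleVU :: "('f \<Rightarrow> 'v \<Rightarrow> 'v) \<Rightarrow> 'f \<Rightarrow> (nat \<Rightarrow> 'v) \<Rightarrow> (nat \<Rightarrow> 'v)" where
  "scaleVU scaleV c f = (\<lambda>l. scaleV c (f l))"

text \<open>\<Psi>(u_a \<otimes> u_b \<otimes> u_c) = A(u_a,u_b)\<otimes>u_c + A(u_b,u_c)\<otimes>u_a + A(u_c,u_a)\<otimes>u_b,
  under the above identification.\<close>
definition Psi_basis :: "('u \<Rightarrow> 'u \<Rightarrow> 'v::ab_group_add) \<Rightarrow> (nat \<Rightarrow> 'u) \<Rightarrow> nat \<Rightarrow> nat \<Rightarrow> nat \<Rightarrow> (nat \<Rightarrow> 'v)" where
  "Psi_basis A u a b c = (\<lambda>l. (if l = c then A (u a) (u b) else 0)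
                            + (if l = a then A (u b) (u c) else 0)
                            + (if l = b then A (u c) (u a) else 0))"

definition Wset :: "('u \<Rightarrow> 'u \<Rightarrow> 'v::ab_group_add) \<Rightarrow> (nat \<Rightarrow> 'u) \<Rightarrow> nat \<Rightarrow> nat set set \<Rightarrow> (nat \<Rightarrow> 'v) set" where
  "Wset A u n B = {Psi_basis A u i j k | i j k. 1 \<le> i \<and> i < j \<and> j < k \<and> k \<le> n
                      \<and> (\<exists>S\<in>B. S \<subseteq> {i, j, k})}"

definition ImPsi :: "('f::field \<Rightarrow> 'v::ab_group_add \<Rightarrow> 'v) \<Rightarrow> ('u \<Rightarrow> 'u \<Rightarrow> 'v) \<Rightarrow> (nat \<Rightarrow> 'u) \<Rightarrow> nat \<Rightarrow> (nat \<Rightarrow> 'v) set" where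
  "ImPsi scaleV A u n = module.span (scaleVU scaleV)
      {Psi_basis A u a b c | a b c. a \<in> {1..n} \<and> b \<in> {1..n} \<and> c \<in> {1..n}}"

end

theory Submission
  imports Defs
begin

lemma c2_Suc: "(Suc n choose 2) = (n choose 2) + n"
  by (simp add: numeral_2_eq_2)
lemma c3_Suc: "(Suc n choose 3) = (n choose 3) + (n choose 2)"
  by (simp add: numeral_3_eq_3 numeral_2_eq_2)

lemma c2_add: "((a + b) choose 2) = (a choose 2) + (b choose 2) + a * b"
  by (induction b) (auto simp: c2_Suc)

lemma c2_mono: "a \<le> b \<Longrightarrow> (a choose 2) \<le> (b::nat) choose 2"
  using c2_add[of a "b - a"] by simp

lemma c3_mono: "a \<le> b \<Longrightarrow> (a choose 3) \<le> (b::nat) choose 3"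
proof (induction b rule: dec_induct)
  case (step b) then show ?case using c3_Suc[of b] by simp
qed simp

lemma rep_exists: "\<exists>r t. (s::nat) = (r choose 2) + t \<and> t < r"
proof (induction s)
  case 0 show ?case by (rule exI[of _ 1]) auto
next
  case (Suc s)
  then obtain r t where rt: "s = (r choose 2) + t" "t < r" by blast
  show ?case
  proof (cases "Suc t < r")
    case True then show ?thesis using rt by (intro exI[of _ r] exI[of _ "Suc t"]) auto
  next
    case False then have "t = r - 1" "r \<ge> 1" using rt by auto
    then show ?thesis using rt c2_Suc[of r]
      by (intro exI[of _ "Suc r"] exI[of _ 0]) auto
  qed
qed

lemma K_mono:
  assumes "(a choose 2) + b \<le> (r choose 2) + t" "b \<le> a" "t < r"
  shows "(a choose 3) + (b choose 2) \<le> (r choose 3) + (t choose 2)"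
proof (cases "a < r")
  case True
  have "(a choose 3) + (b choose 2) \<le> (a choose 3) + (a choose 2)" using c2_mono[OF assms(2)] by simp
  also have "\<dots> = (Suc a choose 3)" by (simp add: c3_Suc)
  also have "\<dots> \<le> (r choose 3)" using True c3_mono[of "Suc a" r] by simp
  finally show ?thesis by simp
next
  case False
  have "a = r"
  proof (rule ccontr)
    assume "a \<noteq> r" then have "Suc r \<le> a" using False by simp
    then have "(Suc r choose 2) \<le> (a choose 2)" by (rule c2_mono)
    then show False using assms c2_Suc[of r] by simp
  qed
  then have "b \<le> t" using assms by simp
  then show ?thesis using c2_mono[of b t] \<open>a = r\<close> by simp
qed

lemma K_step:
  assumes e: "e = (r choose 2) + t" "t < r" and D: "D \<le> e"
    and e': "e - D = (r' choose 2) + t'" "t' < r'"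
    and X: "X \<le> e - D" "X \<le> D choose 2"
  shows "(r' choose 3) + (t' choose 2) + X \<le> (r choose 3) + (t choose 2)"
proof (cases "D choose 2 \<le> e - D")
  case True
  have Dr: "D \<le> r'"
  proof (rule ccontr)
    assume "\<not> D \<le> r'" then have "(Suc r' choose 2) \<le> D choose 2" by (intro c2_mono) simp
    then show False using True e' c2_Suc[of r'] by simp
  qed
  show ?thesis
  proof (cases "t' + D < r'")
    case True
    have "(r' choose 3) + (t' choose 2) + X \<le> (r' choose 3) + ((t' + D) choose 2)"
      using X c2_add[of t' D] by simp
    also have "\<dots> \<le> (r choose 3) + (t choose 2)"
      using True e D e' by (intro K_mono) auto
    finally show ?thesis .
  next
    case False
    define w where "w = t' + D - r'"
    define x where "x = r' - t'"
    define y where "y = r' - D"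
    have tw: "t' = w + y" "D = w + x" "r' = w + x + y"
      using False Dr e'(2) unfolding w_def x_def y_def by auto
    have ineq: "(t' choose 2) + (D choose 2) \<le> (r' choose 2) + (w choose 2)"
      unfolding tw using c2_add[of w y] c2_add[of w x] c2_add[of "w+x" y]
      by (simp add: algebra_simps)
    have "(r' choose 3) + (t' choose 2) + X \<le> (r' choose 3) + (r' choose 2) + (w choose 2)"
      using X ineq by simp
    also have "\<dots> = (Suc r' choose 3) + (w choose 2)" by (simp add: c3_Suc)
    also have "\<dots> \<le> (r choose 3) + (t choose 2)"
    proof (rule K_mono)
      show "(Suc r' choose 2) + w \<le> (r choose 2) + t"
        using e D e' tw c2_Suc[of r'] by simp
      show "w \<le> Suc r'" using tw by simp
    qed (use e in auto)
    finally show ?thesis .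
  qed
next
  case False
  have rD: "r' < D"
  proof (rule ccontr)
    assume "\<not> r' < D" then have "D choose 2 \<le> (r' choose 2)" by (intro c2_mono) simp
    then show False using False e' by simp
  qed
  have "(r' choose 3) + (t' choose 2) + X \<le> (r' choose 3) + (t' choose 2) + ((r' choose 2) + t')"
    using X e' by simp
  also have "\<dots> = (Suc r' choose 3) + (Suc t' choose 2)" by (simp add: c3_Suc c2_Suc)
  also have "\<dots> \<le> (r choose 3) + (t choose 2)"
  proof (rule K_mono)
    show "(Suc r' choose 2) + Suc t' \<le> (r choose 2) + t"
      using e D e' rD c2_Suc[of r'] by simp
  qed (use e e' in auto)
  finally show ?thesis .
qed

definition tri :: "'a set set \<Rightarrow> 'a set set" where
  "tri G = {T. card T = 3 \<and> (\<forall>S\<subseteq>T. card S = 2 \<longrightarrow> S \<in> G)}"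

lemma tri_finite:
  assumes fin: "finite G" and two: "\<forall>S\<in>G. card S = 2"
  shows "finite (tri G)"
proof -
  have finU: "finite (\<Union>G)"
  proof (rule finite_Union[OF fin])
    fix S assume "S \<in> G" then have "card S = 2" using two by auto
    then show "finite S" by (metis card.infinite zero_neq_numeral)
  qed
  have "tri G \<subseteq> Pow (\<Union>G)"
  proof
    fix T assume "T \<in> tri G"
    then have T: "card T = 3" "\<forall>S\<subseteq>T. card S = 2 \<longrightarrow> S \<in> G" unfolding tri_def by auto
    then obtain x y z where xyz: "T = {x,y,z}" "x \<noteq> y" "y \<noteq> z" "x \<noteq> z" by (auto simp: card_3_iff)
    then have "{x,y} \<in> G" "{y,z} \<in> G" using T by auto
    then show "T \<in> Pow (\<Union>G)" using xyz by auto
  qed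
  then show ?thesis using finU by (meson finite_Pow_iff finite_subset)
qed

lemma tri_bound:
  assumes "finite G" "\<forall>S\<in>G. card S = 2" "card G = (r choose 2) + t" "t < r"
  shows "card (tri G) \<le> (r choose 3) + (t choose 2)"
  using assms
proof (induction "card G" arbitrary: G r t rule: less_induct)
  case less
  note fin = less.prems(1) and two = less.prems(2)
  show ?case
  proof (cases "G = {}")
    case True
    have "tri G = {}"
    proof (rule ccontr)
      assume "tri G \<noteq> {}"
      then obtain T where T: "card T = 3" "\<forall>S\<subseteq>T. card S = 2 \<longrightarrow> S \<in> G" unfolding tri_def by auto
      then obtain x y z where "T = {x,y,z}" "x \<noteq> y" by (auto simp: card_3_iff)
      then have "{x,y} \<subseteq> T" "card {x,y} = 2" by auto
      then show False using T True by auto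
    qed
    then show ?thesis by simp
  next
    case False
    then obtain S0 where S0: "S0 \<in> G" by auto
    then have "card S0 = 2" using two by auto
    then obtain v where v: "v \<in> S0" by (auto simp: card_2_iff)
    define G' where "G' = {S\<in>G. v \<notin> S}"
    define Ev where "Ev = {S\<in>G. v \<in> S}"
    have finG': "finite G'" "finite Ev" using fin unfolding G'_def Ev_def by auto
    have split: "card G = card G' + card Ev"
    proof -
      have "G = G' \<union> Ev" "G' \<inter> Ev = {}" unfolding G'_def Ev_def by auto
      then show ?thesis using finG' card_Un_disjoint by metis
    qed
    have EvS0: "S0 \<in> Ev" using S0 v unfolding Ev_def by auto
    then have Dpos: "card Ev \<ge> 1" using finG' by (metis One_nat_def Suc_leI card_gt_0_iff empty_iff)
    define D where "D = card Ev"
    obtain r' t' where rt': "card G' = (r' choose 2) + t'" "t' < r'" using rep_exists by blast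
    have IH: "card (tri G') \<le> (r' choose 3) + (t' choose 2)"
      using less.hyps[of G' r' t'] split Dpos finG' rt' two unfolding G'_def by auto
    define Tv where "Tv = {T\<in>tri G. v \<in> T}"
    have sub: "tri G \<subseteq> tri G' \<union> Tv"
    proof
      fix T assume T: "T \<in> tri G"
      show "T \<in> tri G' \<union> Tv"
      proof (cases "v \<in> T")
        case True then show ?thesis using T unfolding Tv_def by auto
      next
        case False then show ?thesis using T unfolding tri_def G'_def by auto
      qed
    qed
    have finU: "finite (\<Union>G)"
    proof (rule finite_Union[OF fin])
      fix S assume "S \<in> G" then have "card S = 2" using two by auto
      then show "finite S" by (metis card.infinite zero_neq_numeral)
    qed
    have finTv: "finite Tv" using tri_finite[OF fin two] unfolding Tv_def by auto
    have inj: "inj_on (\<lambda>T. T - {v}) Tv"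
    proof (rule inj_onI)
      fix x y assume "x \<in> Tv" "y \<in> Tv" "x - {v} = y - {v}"
      then show "x = y" unfolding Tv_def by (metis (no_types, lifting) insert_Diff mem_Collect_eq)
    qed
    have im1: "(\<lambda>T. T - {v}) ` Tv \<subseteq> G'"
    proof
      fix S assume "S \<in> (\<lambda>T. T - {v}) ` Tv"
      then obtain T where T: "T \<in> Tv" "S = T - {v}" by auto
      then have "card T = 3" "v \<in> T" "\<forall>S\<subseteq>T. card S = 2 \<longrightarrow> S \<in> G" unfolding Tv_def tri_def by auto
      then have "card S = 2" "S \<subseteq> T" using T by auto
      then show "S \<in> G'" using T \<open>\<forall>S\<subseteq>T. card S = 2 \<longrightarrow> S \<in> G\<close> unfolding G'_def by auto
    qed
    have c1: "card Tv \<le> card G'"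
      using card_inj_on_le[OF inj im1 finG'(1)] .
    define N where "N = {w. {v,w} \<in> G}"
    have finN: "finite N"
    proof -
      have "N \<subseteq> \<Union>G" unfolding N_def by auto
      then show ?thesis using finU by (meson finite_subset)
    qed
    have vN: "v \<notin> N" using two unfolding N_def by force
    have cN: "card N \<le> D"
    proof -
      have "inj_on (\<lambda>w. {v,w}) N" using vN by (auto simp: inj_on_def doubleton_eq_iff)
      moreover have "(\<lambda>w. {v,w}) ` N \<subseteq> Ev" unfolding N_def Ev_def by auto
      ultimately show ?thesis unfolding D_def using card_inj_on_le finG'(2) by blast
    qed
    have im2: "(\<lambda>T. T - {v}) ` Tv \<subseteq> {S. S \<subseteq> N \<and> card S = 2}"
    proof
      fix S assume "S \<in> (\<lambda>T. T - {v}) ` Tv"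
      then obtain T where T: "T \<in> Tv" "S = T - {v}" by auto
      then have T3: "card T = 3" "v \<in> T" "\<forall>S\<subseteq>T. card S = 2 \<longrightarrow> S \<in> G" unfolding Tv_def tri_def by auto
      then have "card S = 2" using T by auto
      moreover have "S \<subseteq> N"
      proof
        fix w assume "w \<in> S"
        then have "{v,w} \<subseteq> T" "card {v,w} = 2" using T T3 by auto
        then show "w \<in> N" using T3 unfolding N_def by auto
      qed
      ultimately show "S \<in> {S. S \<subseteq> N \<and> card S = 2}" by auto
    qed
    have c2: "card Tv \<le> D choose 2"
    proof -
      have "card Tv \<le> card {S. S \<subseteq> N \<and> card S = 2}"
        using card_inj_on_le[OF inj im2] finN by auto
      also have "\<dots> = card N choose 2" using n_subsets[OF finN] by simp
      also have "\<dots> \<le> D choose 2" using c2_mono[OF cN] .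
      finally show ?thesis .
    qed
    have "card (tri G) \<le> card (tri G') + card Tv"
    proof -
      have "finite (tri G')" using tri_finite[of G'] finG' two unfolding G'_def by auto
      then have "card (tri G) \<le> card (tri G' \<union> Tv)" using card_mono[OF _ sub] finTv by blast
      also have "\<dots> \<le> card (tri G') + card Tv" by (rule card_Un_le)
      finally show ?thesis .
    qed
    also have "\<dots> \<le> (r choose 3) + (t choose 2)"
    proof -
      have "(r' choose 3) + (t' choose 2) + card Tv \<le> (r choose 3) + (t choose 2)"
        by (rule K_step[of "card G" r t D r' t']) (use less.prems split rt' c1 c2 D_def in auto)
      then show ?thesis using IH by simp
    qed
    finally show ?thesis .
  qed
qed

lemma sum_fun_at: "(\<Sum>x\<in>S. (f x :: 'a \<Rightarrow> 'b::comm_monoid_add)) l = (\<Sum>x\<in>S. f x l)"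
  by (induction S rule: infinite_finite_induct) auto

lemma Aval_pair: "x < y \<Longrightarrow> Aval A u {x,y} = A (u x) (u y)"
  by (simp add: Aval_def)

lemma Ykey_pair: "x < (y::nat) \<Longrightarrow> Ykey {x,y} = (y,x)"
  by (simp add: Ykey_def)

lemma Ypairs_pair: "1 \<le> x \<Longrightarrow> x < y \<Longrightarrow> y \<le> n \<Longrightarrow> {x,y} \<in> Ypairs n"
  by (simp add: Ypairs_def)

lemma finite_Ypairs: "finite (Ypairs n)"
  by (rule finite_subset[of _ "Pow {1..n}"]) (auto simp: Ypairs_def)

lemma colex:
  fixes i j k a b d l :: nat
  assumes "i < j" "j < k" "a < b" "b < d" "(d,b,a) < (k,j,i)" "l = i \<or> l = j \<or> l = k"
  defines "pk \<equiv> (if l = i then (k,j) else if l = j then (k,i) else (j,i))"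
  shows "(l = d \<longrightarrow> (b,a) < pk) \<and> (l = a \<longrightarrow> (d,b) < pk) \<and> (l = b \<longrightarrow> (d,a) < pk)"
  using assms by auto

definition Psi3 :: "('u \<Rightarrow> 'u \<Rightarrow> 'v::ab_group_add) \<Rightarrow> (nat \<Rightarrow> 'u) \<Rightarrow> nat \<times> nat \<times> nat \<Rightarrow> (nat \<Rightarrow> 'v)" where
  "Psi3 A u \<tau> = (case \<tau> of (i,j,k) \<Rightarrow> Psi_basis A u i j k)"

definition Trip :: "nat \<Rightarrow> nat set set \<Rightarrow> (nat \<times> nat \<times> nat) set" where
  "Trip n B = {(i,j,k). 1 \<le> i \<and> i < j \<and> j < k \<and> k \<le> n \<and> (\<exists>S\<in>B. S \<subseteq> {i,j,k})}"

lemma Wset_eq: "Wset A u n B = Psi3 A u ` Trip n B"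
proof
  show "Wset A u n B \<subseteq> Psi3 A u ` Trip n B"
  proof
    fix x assume "x \<in> Wset A u n B"
    then obtain i j k where "x = Psi_basis A u i j k" "(i,j,k) \<in> Trip n B"
      unfolding Wset_def Trip_def by auto
    then show "x \<in> Psi3 A u ` Trip n B" unfolding Psi3_def by force
  qed
  show "Psi3 A u ` Trip n B \<subseteq> Wset A u n B"
    unfolding Wset_def Psi3_def Trip_def by auto
qed

locale psi_setup =
  fixes scaleU :: "'f::field \<Rightarrow> 'u::ab_group_add \<Rightarrow> 'u"
    and scaleV :: "'f \<Rightarrow> 'v::ab_group_add \<Rightarrow> 'v"
    and A :: "'u \<Rightarrow> 'u \<Rightarrow> 'v"
    and u :: "nat \<Rightarrow> 'u"
    and n :: nat
  assumes vsU: "vector_space scaleU"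
    and vsV: "vector_space scaleV"
    and basis_span: "module.span scaleU (u ` {1..n}) = UNIV"
    and bilin1: "\<And>x. Vector_Spaces.linear scaleU scaleV (A x)"
    and bilin2: "\<And>y. Vector_Spaces.linear scaleU scaleV (\<lambda>x. A x y)"
    and alt: "\<And>x. A x x = 0"
begin

sublocale U: vector_space scaleU by (rule vsU)
sublocale V: vector_space scaleV by (rule vsV)

lemma mh1: "module_hom scaleU scaleV (A x)"
  using bilin1[of x] by (simp add: linear_iff_module_hom)
lemma mh2: "module_hom scaleU scaleV (\<lambda>x. A x y)"
  using bilin2[of y] by (simp add: linear_iff_module_hom)

lemma A_add1: "A (x + y) z = A x z + A y z" using module_hom.add[OF mh2] .
lemma A_add2: "A z (x + y) = A z x + A z y" using module_hom.add[OF mh1] .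
lemma A_scale1: "A (scaleU c x) z = scaleV c (A x z)" using module_hom.scale[OF mh2] .
lemma A_scale2: "A z (scaleU c x) = scaleV c (A z x)" using module_hom.scale[OF mh1] .
lemma A_zero1: "A 0 z = 0" using module_hom.zero[OF mh2] .
lemma A_zero2: "A z 0 = 0" using module_hom.zero[OF mh1] .

lemma A_anti: "A x y = - A y x"
proof -
  have "A (x + y) (x + y) = (A x x + A y x) + (A x y + A y y)" by (simp only: A_add1 A_add2)
  then have "A x y + A y x = 0" using alt[of "x+y"] alt[of x] alt[of y] by (simp add: add.commute)
  then show ?thesis by (metis add_eq_0_iff minus_minus)
qed

lemma span_Ypairs:
  assumes im_span: "V.span {A x y | x y. True} = UNIV"
  shows "V.span (Aval A u ` Ypairs n) = UNIV"
proof -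
  define Sp where "Sp = V.span (Aval A u ` Ypairs n)"
  have base: "A (u i) (u j) \<in> Sp" if "i \<in> {1..n}" "j \<in> {1..n}" for i j
  proof (cases i j rule: linorder_cases)
    case less
    then have "A (u i) (u j) = Aval A u {i,j}" by (simp add: Aval_pair)
    moreover have "{i,j} \<in> Ypairs n" using that less by (intro Ypairs_pair) auto
    ultimately show ?thesis unfolding Sp_def by (metis V.span_base imageI)
  next
    case equal then show ?thesis using alt unfolding Sp_def by (simp add: V.span_zero)
  next
    case greater
    then have "A (u j) (u i) = Aval A u {j,i}" by (simp add: Aval_pair)
    moreover have "{j,i} \<in> Ypairs n" using that greater by (intro Ypairs_pair) auto
    ultimately have "A (u j) (u i) \<in> Sp" unfolding Sp_def by (metis V.span_base imageI)
    then show ?thesis using A_anti[of "u i" "u j"] V.span_neg unfolding Sp_def by metis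
  qed
  have step1: "A x (u j) \<in> Sp" if j: "j \<in> {1..n}" for x j
  proof -
    have "x \<in> U.span (u ` {1..n})" using basis_span by simp
    then show ?thesis
    proof (induction rule: U.span_induct)
      case base
      show ?case unfolding U.subspace_def
        by (auto simp: A_zero1 A_add1 A_scale1 Sp_def V.span_zero V.span_add V.span_scale)
    next
      case (step x) then show ?case using base j by auto
    qed
  qed
  have step2: "A x y \<in> Sp" for x y
  proof -
    have "y \<in> U.span (u ` {1..n})" using basis_span by simp
    then show ?thesis
    proof (induction rule: U.span_induct)
      case base
      show ?case unfolding U.subspace_def
        by (auto simp: A_zero2 A_add2 A_scale2 Sp_def V.span_zero V.span_add V.span_scale)
    next
      case (step y) then show ?case using step1 by auto
    qed
  qed
  have "V.span {A x y | x y. True} \<subseteq> Sp"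
    using step2 unfolding Sp_def by (intro V.span_minimal) auto
  then show ?thesis using im_span unfolding Sp_def by auto
qed

abbreviation "BB k \<equiv> Bseq scaleV A u n k"

lemma B_props:
  "BB k \<subseteq> Ypairs n \<and>
   (\<forall>P\<in>BB k. Aval A u P \<notin> V.span (Aval A u ` {Q\<in>Ypairs n. Ykey Q < Ykey P}))"
proof (induction k)
  case 0 then show ?case by simp
next
  case (Suc k)
  define C where "C = {S \<in> Ypairs n. Aval A u S \<notin> V.span (Aval A u ` BB k)}"
  have eq: "BB (Suc k) = (if C = {} then BB k else insert (ARG_MIN Ykey S. S \<in> C) (BB k))"
      by (simp only: Bseq.simps Let_def C_def)
  show ?case
  proof (cases "C = {}")
    case True then show ?thesis using eq Suc by simp
  next
    case False
    have finC: "finite C" using finite_Ypairs unfolding C_def by auto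
    have "is_arg_min Ykey (\<lambda>S. S \<in> C) (ARG_MIN Ykey S. S \<in> C)"
      unfolding arg_min_def by (rule someI_ex) (rule ex_is_arg_min_if_finite[OF finC False])
    then have Pm: "(ARG_MIN Ykey S. S \<in> C) \<in> C \<and> (\<forall>y\<in>C. \<not> Ykey y < Ykey (ARG_MIN Ykey S. S \<in> C))"
      unfolding is_arg_min_def by auto
    define P where "P = (ARG_MIN Ykey S. S \<in> C)"
    have PC: "P \<in> C" and Pmin: "\<forall>y\<in>C. \<not> Ykey y < Ykey P" using Pm unfolding P_def by auto
    have "Aval A u ` {Q\<in>Ypairs n. Ykey Q < Ykey P} \<subseteq> V.span (Aval A u ` BB k)"
      using Pmin unfolding C_def by auto
    then have "V.span (Aval A u ` {Q\<in>Ypairs n. Ykey Q < Ykey P}) \<subseteq> V.span (Aval A u ` BB k)"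
      by (simp add: V.span_minimal)
    moreover have "Aval A u P \<notin> V.span (Aval A u ` BB k)" using PC unfolding C_def by auto
    ultimately have "Aval A u P \<notin> V.span (Aval A u ` {Q\<in>Ypairs n. Ykey Q < Ykey P})" by auto
    moreover have "P \<in> Ypairs n" using PC unfolding C_def by auto
    ultimately show ?thesis using eq False Suc unfolding P_def[symmetric] by auto
  qed
qed

lemma B_card:
  assumes im_span: "V.span {A x y | x y. True} = UNIV"
  shows "k \<le> V.dim (UNIV::'v set) \<Longrightarrow> card (BB k) = k"
proof (induction k)
  case 0 then show ?case by simp
next
  case (Suc k)
  have IH: "card (BB k) = k" using Suc by simp
  have finB: "finite (BB k)" using B_props[of k] finite_Ypairs finite_subset by blast
  define C where "C = {S \<in> Ypairs n. Aval A u S \<notin> V.span (Aval A u ` BB k)}"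
  have eq: "BB (Suc k) = (if C = {} then BB k else insert (ARG_MIN Ykey S. S \<in> C) (BB k))"
    by (simp only: Bseq.simps Let_def C_def)
  have CnE: "C \<noteq> {}"
  proof
    assume "C = {}"
    then have "Aval A u ` Ypairs n \<subseteq> V.span (Aval A u ` BB k)" unfolding C_def by auto
    then have "V.span (Aval A u ` Ypairs n) \<subseteq> V.span (Aval A u ` BB k)" by (simp add: V.span_minimal)
    then have "UNIV \<subseteq> V.span (Aval A u ` BB k)" using span_Ypairs[OF im_span] by simp
    then have "V.dim (UNIV::'v set) \<le> card (Aval A u ` BB k)" using finB by (intro V.dim_le_card) auto
    also have "\<dots> \<le> k" using card_image_le[OF finB] IH by simp
    finally show False using Suc.prems by simp
  qed
  have finC: "finite C" using finite_Ypairs unfolding C_def by auto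
  have "is_arg_min Ykey (\<lambda>S. S \<in> C) (ARG_MIN Ykey S. S \<in> C)"
    unfolding arg_min_def by (rule someI_ex) (rule ex_is_arg_min_if_finite[OF finC CnE])
  then have PC: "(ARG_MIN Ykey S. S \<in> C) \<in> C"
    unfolding is_arg_min_def by auto
  then have "(ARG_MIN Ykey S. S \<in> C) \<notin> BB k" unfolding C_def using V.span_base by blast
  then show ?case using eq CnE finB IH by simp
qed


lemma key_indep:
  assumes hB: "\<forall>P\<in>B. P \<in> Ypairs n \<and> Aval A u P \<notin> V.span (Aval A u ` {Q\<in>Ypairs n. Ykey Q < Ykey P})"
    and fin: "finite T0" and sub: "T0 \<subseteq> Trip n B"
    and sum0: "(\<Sum>\<tau>\<in>T0. scaleVU scaleV (c \<tau>) (Psi3 A u \<tau>)) = 0"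
  shows "\<forall>\<tau>\<in>T0. c \<tau> = 0"
proof (rule ccontr)
  assume "\<not> (\<forall>\<tau>\<in>T0. c \<tau> = 0)"
  define Z where "Z = {\<tau>\<in>T0. c \<tau> \<noteq> 0}"
  define ck :: "nat \<times> nat \<times> nat \<Rightarrow> nat \<times> nat \<times> nat" where "ck = (\<lambda>(i,j,k). (k, j, i))"
  have ckinj: "ck x = ck y \<Longrightarrow> x = y" for x y unfolding ck_def by (cases x, cases y) auto
  have Zfin: "finite Z" and Zne: "Z \<noteq> {}" using fin \<open>\<not> (\<forall>\<tau>\<in>T0. c \<tau> = 0)\<close> unfolding Z_def by auto
  have "Max (ck ` Z) \<in> ck ` Z" using Zfin Zne by (intro Max_in) auto
  then obtain \<tau>0 where t0Z: "\<tau>0 \<in> Z" and t0M: "ck \<tau>0 = Max (ck ` Z)" by auto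
  have t0max: "\<forall>\<tau>\<in>Z. ck \<tau> \<le> ck \<tau>0" using Zfin t0M by auto
  obtain i j k where ijk: "\<tau>0 = (i,j,k)" by (cases \<tau>0) auto
  have "(i,j,k) \<in> Trip n B" using t0Z sub ijk unfolding Z_def by auto
  then have ord: "1 \<le> i" "i < j" "j < k" "k \<le> n" and "\<exists>S\<in>B. S \<subseteq> {i,j,k}" unfolding Trip_def by auto
  then obtain P where PB: "P \<in> B" and Psub: "P \<subseteq> {i,j,k}" by blast
  have "card P = 2" using hB PB unfolding Ypairs_def by auto
  then obtain x y where xy: "P = {x,y}" "x \<noteq> y" by (auto simp: card_2_iff)
  have P3: "P = {i,j} \<or> P = {i,k} \<or> P = {j,k}" using Psub xy by auto
  obtain l where l: "l = i \<or> l = j \<or> l = k" and Pl: "P = {i,j,k} - {l}"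
  proof -
    { assume "P = {i,j}" then have "P = {i,j,k} - {k}" using ord by auto
      then have ?thesis using that by blast }
    moreover
    { assume "P = {i,k}" then have "P = {i,j,k} - {j}" using ord by auto
      then have ?thesis using that by blast }
    moreover
    { assume "P = {j,k}" then have "P = {i,j,k} - {i}" using ord by auto
      then have ?thesis using that by blast }
    ultimately show ?thesis using P3 by blast
  qed
  define pk where "pk = (if l = i then (k,j) else if l = j then (k,i) else (j,i))"
  have YkP: "Ykey P = pk"
  proof -
    { assume "l = i" then have "P = {j,k}" using Pl ord by auto
      then have ?thesis using \<open>l = i\<close> ord unfolding pk_def by (simp add: Ykey_pair) }
    moreover
    { assume "l = j" then have "P = {i,k}" using Pl ord by auto
      then have ?thesis using \<open>l = j\<close> ord unfolding pk_def by (simp add: Ykey_pair) }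
    moreover
    { assume "l = k" then have "P = {i,j}" using Pl ord by auto
      then have ?thesis using \<open>l = k\<close> ord unfolding pk_def by (simp add: Ykey_pair) }
    ultimately show ?thesis using l by blast
  qed
  define Sp where "Sp = V.span (Aval A u ` {Q\<in>Ypairs n. Ykey Q < Ykey P})"
  have notin: "Aval A u P \<notin> Sp" using hB PB unfolding Sp_def by auto
  have inSp: "Aval A u {a,b} \<in> Sp" if "1 \<le> a" "a < b" "b \<le> n" "(b,a) < pk" for a b
  proof -
    have "{a,b} \<in> {Q\<in>Ypairs n. Ykey Q < Ykey P}"
      using that YkP by (auto simp: Ykey_pair Ypairs_pair)
    then show ?thesis unfolding Sp_def by (meson V.span_base imageI)
  qed
  have eval: "(\<Sum>\<tau>\<in>T0. scaleV (c \<tau>) (Psi3 A u \<tau> l)) = 0"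
    using fun_cong[OF sum0, of l] by (simp add: sum_fun_at scaleVU_def)
  have others: "scaleV (c \<tau>) (Psi3 A u \<tau> l) \<in> Sp" if tT: "\<tau> \<in> T0 - {\<tau>0}" for \<tau>
  proof (cases "c \<tau> = 0")
    case True then show ?thesis unfolding Sp_def by (simp add: V.span_zero)
  next
    case False
    then have "\<tau> \<in> Z" using tT unfolding Z_def by auto
    then have "ck \<tau> < ck \<tau>0" using t0max tT ckinj by (metis DiffE insertI1 order_le_less)
    obtain a b d where abd: "\<tau> = (a,b,d)" by (cases \<tau>) auto
    have "(a,b,d) \<in> Trip n B" using tT sub abd by auto
    then have ord2: "1 \<le> a" "a < b" "b < d" "d \<le> n" unfolding Trip_def by auto
    have lt: "(d,b,a) < (k,j,i)" using \<open>ck \<tau> < ck \<tau>0\<close> abd ijk unfolding ck_def by simp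
    have cx: "(l = d \<longrightarrow> (b,a) < pk) \<and> (l = a \<longrightarrow> (d,b) < pk) \<and> (l = b \<longrightarrow> (d,a) < pk)"
      unfolding pk_def by (rule colex[OF ord(2,3) ord2(2,3) lt l])
    have s1: "(if l = d then A (u a) (u b) else 0) \<in> Sp"
    proof (cases "l = d")
      case True
      then have "(b,a) < pk" using cx by simp
      then have "Aval A u {a,b} \<in> Sp" using inSp ord2 by simp
      then show ?thesis using True ord2 by (simp add: Aval_pair)
    qed (simp add: Sp_def V.span_zero)
    have s2: "(if l = a then A (u b) (u d) else 0) \<in> Sp"
    proof (cases "l = a")
      case True
      then have "(d,b) < pk" using cx by simp
      then have "Aval A u {b,d} \<in> Sp" using inSp ord2 by simp
      then show ?thesis using True ord2 by (simp add: Aval_pair)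
    qed (simp add: Sp_def V.span_zero)
    have s3: "(if l = b then A (u d) (u a) else 0) \<in> Sp"
    proof (cases "l = b")
      case True
      then have "(d,a) < pk" using cx by simp
      then have "Aval A u {a,d} \<in> Sp" using inSp ord2 by simp
      then have "- A (u a) (u d) \<in> Sp" unfolding Sp_def using ord2 by (simp add: Aval_pair V.span_neg)
      then show ?thesis using True A_anti[of "u d" "u a"] by simp
    qed (simp add: Sp_def V.span_zero)
    have "Psi3 A u \<tau> l \<in> Sp"
      using s1 s2 s3 unfolding abd Psi3_def Psi_basis_def Sp_def by (simp add: V.span_add)
    then show ?thesis unfolding Sp_def by (rule V.span_scale)
  qed
  have top: "Psi3 A u \<tau>0 l = Aval A u P \<or> Psi3 A u \<tau>0 l = - Aval A u P"
  proof -
    have ps: "Psi3 A u \<tau>0 l = (if l = k then A (u i) (u j) else 0) + (if l = i then A (u j) (u k) else 0)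
       + (if l = j then A (u k) (u i) else 0)" unfolding ijk Psi3_def Psi_basis_def by simp
    { assume li: "l = i" then have "P = {j,k}" using Pl ord by auto
      moreover have "Psi3 A u \<tau>0 l = A (u j) (u k)" using ps li ord by simp
      ultimately have ?thesis using ord by (simp add: Aval_pair) }
    moreover
    { assume lj: "l = j" then have "P = {i,k}" using Pl ord by auto
      moreover have "Psi3 A u \<tau>0 l = A (u k) (u i)" using ps lj ord by simp
      ultimately have ?thesis using ord A_anti[of "u k" "u i"] by (simp add: Aval_pair) }
    moreover
    { assume lk: "l = k" then have "P = {i,j}" using Pl ord by auto
      moreover have "Psi3 A u \<tau>0 l = A (u i) (u j)" using ps lk ord by simp
      ultimately have ?thesis using ord by (simp add: Aval_pair) }
    ultimately show ?thesis using l by blast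
  qed
  have t0T: "\<tau>0 \<in> T0" using t0Z unfolding Z_def by auto
  define F where "F = (\<lambda>\<tau>. scaleV (c \<tau>) (Psi3 A u \<tau> l))"
  define R where "R = (\<Sum>\<tau>\<in>T0 - {\<tau>0}. F \<tau>)"
  have sr: "(\<Sum>\<tau>\<in>T0. F \<tau>) = F \<tau>0 + R" unfolding R_def by (rule sum.remove[OF fin t0T])
  have "(\<Sum>\<tau>\<in>T0. F \<tau>) = 0" using eval unfolding F_def .
  then have "F \<tau>0 + R = 0" unfolding sr .
  then have FR: "F \<tau>0 = - R" by (rule eq_neg_iff_add_eq_0[THEN iffD2])
  have "R \<in> Sp" unfolding R_def Sp_def by (rule V.span_sum) (use others in \<open>auto simp: F_def Sp_def\<close>)
  then have "F \<tau>0 \<in> Sp" unfolding FR Sp_def by (rule V.span_neg)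
  then have X: "scaleV (inverse (c \<tau>0)) (F \<tau>0) \<in> Sp"
    unfolding Sp_def by (rule V.span_scale)
  have c0: "c \<tau>0 \<noteq> 0" using t0Z unfolding Z_def by auto
  have "scaleV (inverse (c \<tau>0)) (F \<tau>0) = Psi3 A u \<tau>0 l"
    unfolding F_def V.scale_scale using c0 by simp
  then have "Psi3 A u \<tau>0 l \<in> Sp" using X by simp
  then have "Aval A u P \<in> Sp"
  proof (cases "Psi3 A u \<tau>0 l = Aval A u P")
    case False
    then have "Psi3 A u \<tau>0 l = - Aval A u P" using top by simp
    moreover assume "Psi3 A u \<tau>0 l \<in> Sp"
    ultimately have "- (- Aval A u P) \<in> Sp" unfolding Sp_def using V.span_neg by metis
    then show ?thesis by simp
  qed simp
  then show False using notin by simp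
qed

end

lemma vs_VU:
  assumes "vector_space (scaleV :: 'f::field \<Rightarrow> 'v::ab_group_add \<Rightarrow> 'v)"
  shows "vector_space (scaleVU scaleV)"
proof -
  interpret V: vector_space scaleV by (rule assms)
  show ?thesis
    by unfold_locales (simp_all add: scaleVU_def fun_eq_iff V.scale_right_distrib V.scale_left_distrib)
qed

lemma three_sorted:
  assumes "card (T::nat set) = 3"
  obtains i j k where "i < j" "j < k" "T = {i,j,k}"
proof -
  obtain x y z where T: "T = {x,y,z}" "x \<noteq> y" "y \<noteq> z" "x \<noteq> z" using assms by (auto simp: card_3_iff)
  have "\<exists>i j k. i < j \<and> j < k \<and> T = {i,j,k}"
  proof (cases "x < y")
    case True
    then show ?thesis
    proof (cases "y < z")
      case True then show ?thesis using \<open>x < y\<close> T by blast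
    next
      case False
      then show ?thesis
      proof (cases "x < z")
        case True then show ?thesis using \<open>x < y\<close> \<open>\<not> y < z\<close> T
          by (intro exI[of _ x] exI[of _ z] exI[of _ y]) (simp_all add: insert_commute)
      next
        case False then show ?thesis using \<open>x < y\<close> \<open>\<not> y < z\<close> T
          by (intro exI[of _ z] exI[of _ x] exI[of _ y]) (simp_all add: insert_commute)
      qed
    qed
  next
    case False
    then show ?thesis
    proof (cases "x < z")
      case True then show ?thesis using \<open>\<not> x < y\<close> T
        by (intro exI[of _ y] exI[of _ x] exI[of _ z]) (simp_all add: insert_commute)
    next
      case False
      then show ?thesis
      proof (cases "y < z")
        case True then show ?thesis using \<open>\<not> x < y\<close> \<open>\<not> x < z\<close> T
          by (intro exI[of _ y] exI[of _ z] exI[of _ x]) (simp_all add: insert_commute)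
      next
        case False then show ?thesis using \<open>\<not> x < y\<close> \<open>\<not> x < z\<close> T
          by (intro exI[of _ z] exI[of _ y] exI[of _ x]) (simp_all add: insert_commute)
      qed
    qed
  qed
  then show ?thesis using that by blast
qed

lemma finite_Trip: "finite (Trip n B)"
  by (rule finite_subset[of _ "{1..n} \<times> {1..n} \<times> {1..n}"]) (auto simp: Trip_def)

lemma count_Trip:
  assumes "B \<subseteq> Ypairs n"
  shows "n choose 3 \<le> card (Trip n B) + card (tri (Ypairs n - B))"
proof -
  define G where "G = Ypairs n - B"
  define f :: "nat \<times> nat \<times> nat \<Rightarrow> nat set" where "f = (\<lambda>(i,j,k). {i,j,k})"
  have sub: "{T. T \<subseteq> {1..n} \<and> card T = 3} \<subseteq> f ` Trip n B \<union> tri G"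
  proof
    fix T assume "T \<in> {T. T \<subseteq> {1..n} \<and> card T = 3}"
    then have Tn: "T \<subseteq> {1..n}" and T3: "card T = 3" by auto
    obtain i j k where ijk: "i < j" "j < k" "T = {i,j,k}" using three_sorted[OF T3] by blast
    show "T \<in> f ` Trip n B \<union> tri G"
    proof (cases "\<exists>S\<in>B. S \<subseteq> {i,j,k}")
      case True
      then have "(i,j,k) \<in> Trip n B" using ijk Tn unfolding Trip_def by auto
      moreover have "f (i,j,k) = T" using ijk unfolding f_def by simp
      ultimately show ?thesis by (metis UnI1 imageI)
    next
      case False
      have "\<forall>S\<subseteq>T. card S = 2 \<longrightarrow> S \<in> G"
      proof (intro allI impI)
        fix S assume "S \<subseteq> T" "card S = 2"
        then have "S \<in> Ypairs n" unfolding Ypairs_def using Tn by auto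
        moreover have "S \<notin> B" using False \<open>S \<subseteq> T\<close> ijk(3) by auto
        ultimately show "S \<in> G" unfolding G_def by simp
      qed
      then have "T \<in> tri G" using T3 unfolding tri_def by blast
      then show ?thesis by blast
    qed
  qed
  have finG: "finite G" "\<forall>S\<in>G. card S = 2" using finite_Ypairs unfolding G_def Ypairs_def by auto
  have "n choose 3 = card {T. T \<subseteq> {1..n} \<and> card T = 3}" using n_subsets[of "{1..n}" 3] by simp
  also have "\<dots> \<le> card (f ` Trip n B \<union> tri G)"
    by (rule card_mono[OF _ sub]) (use finite_Trip tri_finite[OF finG(1) finG(2)] in blast)
  also have "\<dots> \<le> card (f ` Trip n B) + card (tri G)" by (rule card_Un_le)
  also have "\<dots> \<le> card (Trip n B) + card (tri G)" using card_image_le[OF finite_Trip] by simp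
  finally show ?thesis unfolding G_def .
qed

theorem proposition2p8:
  fixes scaleU :: "'f::field \<Rightarrow> 'u::ab_group_add \<Rightarrow> 'u"
    and scaleV :: "'f \<Rightarrow> 'v::ab_group_add \<Rightarrow> 'v"
    and A :: "'u \<Rightarrow> 'u \<Rightarrow> 'v"
    and u :: "nat \<Rightarrow> 'u"
    and n m r t :: nat
  assumes vsU: "vector_space scaleU"
    and vsV: "vector_space scaleV"
    and basis_inj: "inj_on u {1..n}"
    and basis_indep: "\<not> module.dependent scaleU (u ` {1..n})"
    and basis_span: "module.span scaleU (u ` {1..n}) = UNIV"
    and dimV: "vector_space.dim scaleV (UNIV :: 'v set) = m"
    and bilin1: "\<And>x. Vector_Spaces.linear scaleU scaleV (A x)"
    and bilin2: "\<And>y. Vector_Spaces.linear scaleU scaleV (\<lambda>x. A x y)"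
    and alt: "\<And>x. A x x = 0"
    and im_span: "module.span scaleV {A x y | x y. True} = UNIV"
    and rt: "int (n choose 2) - int m = int (r choose 2) + int t"
    and tr: "t < r"
  shows "(\<exists>S \<subseteq> Wset A u n (Bseq scaleV A u n m).
            finite S \<and> \<not> module.dependent (scaleVU scaleV) S \<and>
            int (card S) \<ge> int (n choose 3) - int (r choose 3) - int (t choose 2))
       \<and> int (vector_space.dim (scaleVU scaleV) (ImPsi scaleV A u n))
            \<ge> int (n choose 3) - int (r choose 3) - int (t choose 2)"
proof -
  interpret P: psi_setup scaleU scaleV A u n
    unfolding psi_setup_def using vsU vsV basis_span bilin1 bilin2 alt by blast
  interpret W: vector_space "scaleVU scaleV" by (rule vs_VU[OF vsV])
  define B where "B = Bseq scaleV A u n m"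
  have BP: "B \<subseteq> Ypairs n \<and> (\<forall>P\<in>B. Aval A u P \<notin> P.V.span (Aval A u ` {Q\<in>Ypairs n. Ykey Q < Ykey P}))"
    using P.B_props[of m] unfolding B_def .
  then have Bsub: "B \<subseteq> Ypairs n" by blast
  have hB: "\<forall>P\<in>B. P \<in> Ypairs n \<and> Aval A u P \<notin> P.V.span (Aval A u ` {Q\<in>Ypairs n. Ykey Q < Ykey P})"
    using BP by blast
  have cardB: "card B = m" using P.B_card[OF im_span, of m] dimV unfolding B_def by simp
  have cY: "card (Ypairs n) = n choose 2" using n_subsets[of "{1..n}" 2] unfolding Ypairs_def by simp
  have finB: "finite B" using Bsub finite_Ypairs finite_subset by blast
  define G where "G = Ypairs n - B"
  have "card G = card (Ypairs n) - card B" unfolding G_def using card_Diff_subset[OF finB Bsub] .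
  moreover have "card B \<le> card (Ypairs n)" using card_mono[OF finite_Ypairs Bsub] .
  ultimately have "int (card G) = int (n choose 2) - int m" using cY cardB by simp
  then have "int (card G) = int ((r choose 2) + t)" using rt by simp
  then have cG: "card G = (r choose 2) + t" by (simp only: of_nat_eq_iff)
  have finG: "finite G" "\<forall>S\<in>G. card S = 2" using finite_Ypairs unfolding G_def Ypairs_def by auto
  have triB: "card (tri G) \<le> (r choose 3) + (t choose 2)" by (rule tri_bound[OF finG cG tr])
  have cntT: "n choose 3 \<le> card (Trip n B) + card (tri G)" unfolding G_def by (rule count_Trip[OF Bsub])
  define Tr where "Tr = Trip n B"
  define S where "S = Psi3 A u ` Tr"
  have kI: "\<forall>\<tau>\<in>T0. c \<tau> = 0"
    if "finite T0" "T0 \<subseteq> Tr" "(\<Sum>\<tau>\<in>T0. scaleVU scaleV (c \<tau>) (Psi3 A u \<tau>)) = 0" for T0 c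
    using P.key_indep[OF hB] that unfolding Tr_def by blast
  have inj: "inj_on (Psi3 A u) Tr"
  proof (rule inj_onI, rule ccontr)
    fix x y assume xy: "x \<in> Tr" "y \<in> Tr" "Psi3 A u x = Psi3 A u y" "x \<noteq> y"
    define c :: "nat \<times> nat \<times> nat \<Rightarrow> 'f" where "c = (\<lambda>\<tau>. if \<tau> = x then 1 else -1)"
    have "(\<Sum>\<tau>\<in>{x,y}. scaleVU scaleV (c \<tau>) (Psi3 A u \<tau>))
        = scaleVU scaleV 1 (Psi3 A u x) + scaleVU scaleV (-1) (Psi3 A u y)"
      using xy(4) unfolding c_def by simp
    also have "\<dots> = 0" using xy(3) by (simp add: scaleVU_def fun_eq_iff)
    finally have "\<forall>\<tau>\<in>{x,y}. c \<tau> = 0" using xy by (intro kI) auto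
    then show False unfolding c_def by simp
  qed
  have finTr: "finite Tr" unfolding Tr_def by (rule finite_Trip)
  have indep: "\<not> W.dependent S"
  proof
    assume "W.dependent S"
    then obtain t uu where t: "finite t" "t \<subseteq> S" "(\<Sum>v\<in>t. scaleVU scaleV (uu v) v) = 0" and
      v: "\<exists>v\<in>t. uu v \<noteq> 0" unfolding W.dependent_explicit by blast
    define T0 where "T0 = {\<tau>\<in>Tr. Psi3 A u \<tau> \<in> t}"
    have imT0: "Psi3 A u ` T0 = t" using t(2) unfolding T0_def S_def by auto
    have injT0: "inj_on (Psi3 A u) T0" using inj unfolding T0_def by (rule inj_on_subset) auto
    have finT0: "finite T0" using finTr unfolding T0_def by auto
    have "(\<Sum>\<tau>\<in>T0. scaleVU scaleV (uu (Psi3 A u \<tau>)) (Psi3 A u \<tau>)) = (\<Sum>v\<in>t. scaleVU scaleV (uu v) v)"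
      unfolding imT0[symmetric] by (rule sum.reindex[OF injT0, symmetric, unfolded comp_def])
    then have "\<forall>\<tau>\<in>T0. uu (Psi3 A u \<tau>) = 0" using t(3) finT0 by (intro kI) (auto simp: T0_def)
    then show False using v imT0 by auto
  qed
  have cardS: "card S = card Tr" unfolding S_def by (rule card_image[OF inj])
  have finS: "finite S" unfolding S_def using finTr by simp
  have bound: "int (card S) \<ge> int (n choose 3) - int (r choose 3) - int (t choose 2)"
    using cntT triB cardS unfolding Tr_def by linarith
  have SW: "S \<subseteq> Wset A u n (Bseq scaleV A u n m)" unfolding S_def Tr_def B_def Wset_eq by simp
  define Gen where "Gen = {Psi_basis A u a b c | a b c. a \<in> {1..n} \<and> b \<in> {1..n} \<and> c \<in> {1..n}}"
  have finGen: "finite Gen"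
  proof -
    have "Gen \<subseteq> (\<lambda>(a,b,c). Psi_basis A u a b c) ` ({1..n} \<times> {1..n} \<times> {1..n})"
      unfolding Gen_def by force
    then show ?thesis by (rule finite_subset) auto
  qed
  have SGen: "S \<subseteq> Gen" unfolding S_def Tr_def Gen_def Trip_def Psi3_def by force
  have ImEq: "ImPsi scaleV A u n = W.span Gen" unfolding ImPsi_def Gen_def by simp
  have "S \<subseteq> W.span Gen" using SGen W.span_superset by blast
  then obtain Bs where Bs: "S \<subseteq> Bs" "Bs \<subseteq> W.span Gen" "\<not> W.dependent Bs" "W.span Gen \<subseteq> W.span Bs"
    using W.maximal_independent_subset_extend[OF _ indep] by blast
  have finBs: "finite Bs" using W.independent_span_bound[OF finGen Bs(3) Bs(2)] by blast
  have "card Bs = W.dim (W.span Gen)" by (rule W.basis_card_eq_dim[OF Bs(2) Bs(4) Bs(3)])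
  moreover have "card S \<le> card Bs" by (rule card_mono[OF finBs Bs(1)])
  ultimately have dimb: "card S \<le> W.dim (ImPsi scaleV A u n)" unfolding ImEq by simp
  show ?thesis
  proof
    show "\<exists>S \<subseteq> Wset A u n (Bseq scaleV A u n m). finite S \<and> \<not> module.dependent (scaleVU scaleV) S \<and>
            int (card S) \<ge> int (n choose 3) - int (r choose 3) - int (t choose 2)"
      using SW finS indep bound by blast
    show "int (vector_space.dim (scaleVU scaleV) (ImPsi scaleV A u n))
            \<ge> int (n choose 3) - int (r choose 3) - int (t choose 2)"
      using dimb bound by linarith
  qed
qed

end
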